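(* The VCG-nearest payment rule is not non-decreasing: there exists a combinatorial auction instance (goods, bidders, bundles of interest), an allocation $x$, a bidder $i$, and bid profiles $b,b'$ with $x$ efficient for both, $b_{-i}=b'_{-i}$, $b_i'\ge b_i$ coordinatewise, such that $p_i(b',x)<p_i(b,x)$ under VCG-nearest.
   Context: A combinatorial auction sells goods $M$ to bidders $N=\{1,\dots,n\}$. Each bidder $i$ bids $b_i(K)\ge0$ on each of his bundles of interest (bids on other bundles are $0$). An allocation $x$ gives each bidder $i$ one bundle $x_i$ (a bundle of interest or $\emptyset$), pairwise disjoint; $x$ is efficient for $b$ if it maximizes $W(b,x)=\sum_{i} b_i(x_i)$. For $L\subseteq N$ let $W_L(b_L,x)=\sum_{j\in L}b_j(x_j)$ and $X_L(b_L)$ an allocation maximizing $W_L(b_L,\cdot)$ (allocating goods only among bidders in $L$); write $W_{-i}$, $X_{-i}$ for $L=N\setminus\{i\}$. The VCG payment is $q_i(b,x)=W_{-i}(b_{-i},X_{-i}(b_{-i}))-W_{-i}(b_{-i},x)$. The core is the set of payment vectors $p$ with $\sum_{i\in N\setminus L}p_i\ge W_L(b_L,X_L(b_L))-W_L(b_L,x)$ for all $L\subseteq N$; the minimum-revenue core is the set of core points minimizing $\sum_i p_i$. The VCG-nearest payment $p(b,x)$ is the unique point of the minimum-revenue core minimizing the Euclidean distance $\|p-q(b,x)\|_2$. A payment rule is non-decreasing if for every allocation $x$, every bidder $i$ and all bid profiles $b,b'$ for which $x$ is efficient, with $b_{-i}=b'_{-i}$ and $b_i'\ge b_i$ coordinatewise,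 one has $p_i(b',x)\ge p_i(b,x)$. *)

theory Defs
  imports Complex_Main
begin

text \<open>I i is the set of bundles of interest of bidder i.
  Bid profiles b :: nat => nat set => real give b i K, the bid of bidder i on bundle K.
  Allocations x :: nat => nat set give x i, the bundle of bidder i
  (by convention, the empty bundle for non-bidders).\<close>

type_synonym bids = "nat \<Rightarrow> nat set \<Rightarrow> real"
type_synonym allocation = "nat \<Rightarrow> nat set"
type_synonym payments = "nat \<Rightarrow> real"

definition bidders :: "nat \<Rightarrow> nat set" where
  "bidders n = {1..n}"

definition auction_instance :: "nat set \<Rightarrow> nat \<Rightarrow> (nat \<Rightarrow> nat set set) \<Rightarrow> bool" where
  "auction_instance M n I \<longleftrightarrow> finite M \<and> (\<forall>i \<in> bidders n. I i \<subseteq> Pow M)"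

definition valid_bids :: "nat \<Rightarrow> (nat \<Rightarrow> nat set set) \<Rightarrow> bids \<Rightarrow> bool" where
  "valid_bids n I b \<longleftrightarrow>
     (\<forall>i \<in> bidders n. \<forall>K. b i K \<ge> 0 \<and> (K \<notin> I i \<longrightarrow> b i K = 0))"

definition is_allocation :: "nat \<Rightarrow> (nat \<Rightarrow> nat set set) \<Rightarrow> allocation \<Rightarrow> bool" where
  "is_allocation n I x \<longleftrightarrow>
     (\<forall>i \<in> bidders n. x i \<in> I i \<or> x i = {}) \<and>
     (\<forall>i \<in> bidders n. \<forall>j \<in> bidders n. i \<noteq> j \<longrightarrow> x i \<inter> x j = {}) \<and>
     (\<forall>i. i \<notin> bidders n \<longrightarrow> x i = {})"

definition welfare :: "nat set \<Rightarrow> bids \<Rightarrow> allocation \<Rightarrow> real" where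
  "welfare L b x = (\<Sum>j\<in>L. b j (x j))"

definition efficient :: "nat \<Rightarrow> (nat \<Rightarrow> nat set set) \<Rightarrow> bids \<Rightarrow> allocation \<Rightarrow> bool" where
  "efficient n I b x \<longleftrightarrow> is_allocation n I x \<and>
     (\<forall>y. is_allocation n I y \<longrightarrow> welfare (bidders n) b y \<le> welfare (bidders n) b x)"

definition opt_welfare :: "nat \<Rightarrow> (nat \<Rightarrow> nat set set) \<Rightarrow> nat set \<Rightarrow> bids \<Rightarrow> real" where
  "opt_welfare n I L b = Max ((\<lambda>y. welfare L b y) `
      {y. is_allocation n I y \<and> (\<forall>j \<in> bidders n - L. y j = {})})"

definition vcg_payment :: "nat \<Rightarrow> (nat \<Rightarrow> nat set set) \<Rightarrow> bids \<Rightarrow> allocation \<Rightarrow> payments" where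
  "vcg_payment n I b x i =
     (if i \<in> bidders n then opt_welfare n I (bidders n - {i}) b - welfare (bidders n - {i}) b x
      else 0)"

definition in_core :: "nat \<Rightarrow> (nat \<Rightarrow> nat set set) \<Rightarrow> bids \<Rightarrow> allocation \<Rightarrow> payments \<Rightarrow> bool" where
  "in_core n I b x p \<longleftrightarrow> (\<forall>i. i \<notin> bidders n \<longrightarrow> p i = 0) \<and>
     (\<forall>L \<subseteq> bidders n. (\<Sum>i \<in> bidders n - L. p i) \<ge> opt_welfare n I L b - welfare L b x)"

definition in_min_revenue_core :: "nat \<Rightarrow> (nat \<Rightarrow> nat set set) \<Rightarrow> bids \<Rightarrow> allocation \<Rightarrow> payments \<Rightarrow> bool" where
  "in_min_revenue_core n I b x p \<longleftrightarrow> in_core n I b x p \<and>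
     (\<forall>p'. in_core n I b x p' \<longrightarrow> (\<Sum>i \<in> bidders n. p i) \<le> (\<Sum>i \<in> bidders n. p' i))"

definition pay_dist :: "nat \<Rightarrow> payments \<Rightarrow> payments \<Rightarrow> real" where
  "pay_dist n p q = sqrt (\<Sum>i \<in> bidders n. (p i - q i)^2)"

definition vcg_nearest :: "nat \<Rightarrow> (nat \<Rightarrow> nat set set) \<Rightarrow> bids \<Rightarrow> allocation \<Rightarrow> payments" where
  "vcg_nearest n I b x = (THE p. in_min_revenue_core n I b x p \<and>
     (\<forall>p'. in_min_revenue_core n I b x p' \<longrightarrow>
        pay_dist n p (vcg_payment n I b x) \<le> pay_dist n p' (vcg_payment n I b x)))"

end

theory Submission imports Defs begin

definition II :: "nat \<Rightarrow> nat set set" where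
  "II = (\<lambda>i. if i = 1 then {{0},{0,1}} else if i = 2 then {{1}} else if i = 3 then {{0,1}} else {})"
definition bA :: bids where
  "bA = (\<lambda>i K. if i = 1 \<and> K = {0} then 2 else if i = 2 \<and> K = {1} then 2
              else if i = 3 \<and> K = {0,1} then 2 else 0)"
definition bB :: bids where
  "bB = (\<lambda>i K. if i = 1 \<and> K = {0,1} then 3 else bA i K)"
definition xx :: allocation where
  "xx = (\<lambda>i. if i = 1 then {0} else if i = 2 then {1} else {})"
definition mk :: "nat set \<Rightarrow> nat set \<Rightarrow> nat set \<Rightarrow> allocation" where
  "mk a c d = (\<lambda>j. if j = 1 then a else if j = 2 then c else if j = 3 then d else {})"

definition Trip :: "(nat set \<times> nat set \<times> nat set) set" where
  "Trip = {({0},{1},{}), ({0},{},{}), ({},{1},{}), ({0,1},{},{}), ({},{},{0,1}), ({},{},{})}"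

lemma bid3: "bidders 3 = {1,2,3}" by (auto simp: bidders_def)

lemma alloc_mk: "is_allocation 3 II y \<Longrightarrow> y = mk (y 1) (y 2) (y 3)"
  by (rule ext) (auto simp: mk_def is_allocation_def bid3)

lemma alloc_trip: "is_allocation 3 II y \<Longrightarrow> (y 1, y 2, y 3) \<in> Trip"
proof -
  assume a: "is_allocation 3 II y"
  have "\<forall>i\<in>{1,2,3}. y i \<in> II i \<or> y i = {}" "\<forall>i\<in>{1,2,3}. \<forall>j\<in>{1,2,3}. i \<noteq> j \<longrightarrow> y i \<inter> y j = {}"
    using a unfolding is_allocation_def bid3 by simp_all
  then have "y 1 \<in> II 1 \<or> y 1 = {}" "y 2 \<in> II 2 \<or> y 2 = {}" "y 3 \<in> II 3 \<or> y 3 = {}"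
     and d: "y 1 \<inter> y 2 = {}" "y 1 \<inter> y 3 = {}" "y 2 \<inter> y 3 = {}"
    by (simp_all only: ball_simps)
  then have 1: "y 1 = {} \<or> y 1 = {0} \<or> y 1 = {0,1}" "y 2 = {} \<or> y 2 = {1}" "y 3 = {} \<or> y 3 = {0,1}"
    unfolding II_def by (simp_all, (elim disjE, simp_all)+)
  show ?thesis using 1 d unfolding Trip_def by (elim disjE) simp_all
qed
lemma trip_alloc: "(a,c,d) \<in> Trip \<Longrightarrow> is_allocation 3 II (mk a c d)"
  unfolding Trip_def by (simp only: insert_iff empty_iff prod.inject) (elim disjE conjE; simp add: is_allocation_def bid3 mk_def II_def)

lemma fin_alloc: "finite {y. is_allocation 3 II y}"
proof -
  have "{y. is_allocation 3 II y} \<subseteq> (\<lambda>(a,c,d). mk a c d) ` Trip"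
  proof
    fix y assume "y \<in> {y. is_allocation 3 II y}"
    then have a: "is_allocation 3 II y" by simp
    have "y = (\<lambda>(a,c,d). mk a c d) (y 1, y 2, y 3)" using alloc_mk[OF a] by simp
    then show "y \<in> (\<lambda>(a,c,d). mk a c d) ` Trip" using alloc_trip[OF a] by (rule image_eqI)
  qed
  moreover have "finite Trip" by (simp add: Trip_def)
  ultimately show ?thesis by (meson finite_imageI finite_subset)
qed

lemma mk_simps[simp]: "mk a c d 1 = a" "mk a c d (Suc 0) = a" "mk a c d 2 = c" "mk a c d 3 = d"
  by (simp_all add: mk_def)

lemma ball_Diff_simp[simp]: "(\<forall>j\<in>A-B. P j) = (\<forall>j\<in>A. j \<notin> B \<longrightarrow> P j)"
  by auto

lemma bvals[simp]:
  "bA 1 {} = 0" "bA 1 {0} = 2" "bA 1 {0,1} = 0" "bA 2 {} = 0" "bA 2 {1} = 2" "bA 3 {} = 0" "bA 3 {0,1} = 2"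
  "bB 1 {} = 0" "bB 1 {0} = 2" "bB 1 {0,1} = 3" "bB 2 {} = 0" "bB 2 {1} = 2" "bB 3 {} = 0" "bB 3 {0,1} = 2"
  "bA (Suc 0) {} = 0" "bA (Suc 0) {0} = 2" "bA (Suc 0) {0,Suc 0} = 0" "bA 2 {Suc 0} = 2" "bA 3 {0,Suc 0} = 2"
  "bB (Suc 0) {} = 0" "bB (Suc 0) {0} = 2" "bB (Suc 0) {0,Suc 0} = 3" "bB 2 {Suc 0} = 2" "bB 3 {0,Suc 0} = 2"
  by (simp_all add: bA_def bB_def)

lemma opt_char:
  assumes "(a0,c0,d0) \<in> Trip" "\<forall>j\<in>{1,2,3}-L. mk a0 c0 d0 j = {}" "welfare L bb (mk a0 c0 d0) = v"
    "\<forall>(a,c,d)\<in>Trip. (\<forall>j\<in>{1,2,3}-L. mk a c d j = {}) \<longrightarrow> welfare L bb (mk a c d) \<le> v"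
  shows "opt_welfare 3 II L bb = v"
  unfolding opt_welfare_def
proof (rule Max_eqI)
  show "finite ((\<lambda>y. welfare L bb y) ` {y. is_allocation 3 II y \<and> (\<forall>j\<in>bidders 3 - L. y j = {})})"
    by (rule finite_imageI, rule finite_subset[OF _ fin_alloc]) auto
next
  fix w assume "w \<in> (\<lambda>y. welfare L bb y) ` {y. is_allocation 3 II y \<and> (\<forall>j\<in>bidders 3 - L. y j = {})}"
  then obtain y where y: "is_allocation 3 II y" "\<forall>j\<in>bidders 3 - L. y j = {}" "w = welfare L bb y" by auto
  have e: "y = mk (y 1) (y 2) (y 3)" using alloc_mk[OF y(1)] .
  have "(y 1, y 2, y 3) \<in> Trip" using alloc_trip[OF y(1)] .
  with assms(4) have "(\<forall>j\<in>{1,2,3}-L. mk (y 1) (y 2) (y 3) j = {}) \<longrightarrow> welfare L bb (mk (y 1) (y 2) (y 3)) \<le> v"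
    by fast
  then show "w \<le> v" using y e bid3 by metis
next
  show "v \<in> (\<lambda>y. welfare L bb y) ` {y. is_allocation 3 II y \<and> (\<forall>j\<in>bidders 3 - L. y j = {})}"
  proof (rule image_eqI[where x="mk a0 c0 d0"])
    show "v = welfare L bb (mk a0 c0 d0)" using assms(3) by simp
    show "mk a0 c0 d0 \<in> {y. is_allocation 3 II y \<and> (\<forall>j\<in>bidders 3 - L. y j = {})}"
      using assms(2) trip_alloc[OF assms(1)] bid3 by simp
  qed
qed

lemma subs3: "(\<forall>L\<subseteq>{1,2,3::nat}. Q L) \<longleftrightarrow> Q {} \<and> Q {1} \<and> Q {2} \<and> Q {3} \<and> Q {1,2} \<and> Q {1,3} \<and> Q {2,3} \<and> Q {1,2,3}"
proof
  assume h: "Q {} \<and> Q {1} \<and> Q {2} \<and> Q {3} \<and> Q {1,2} \<and> Q {1,3} \<and> Q {2,3} \<and> Q {1,2,3}"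
  show "\<forall>L\<subseteq>{1,2,3::nat}. Q L"
  proof (intro allI impI)
    fix L :: "nat set" assume sub: "L \<subseteq> {1,2,3}"
    have e: "L = {j. j = 1 \<and> 1 \<in> L} \<union> ({j. j = 2 \<and> 2 \<in> L} \<union> {j. j = 3 \<and> 3 \<in> L})"
      using sub by auto
    have "Q ({j. j = 1 \<and> 1 \<in> L} \<union> ({j. j = 2 \<and> 2 \<in> L} \<union> {j. j = 3 \<and> 3 \<in> L}))"
      using h by (cases "1 \<in> L"; cases "2 \<in> L"; cases "3 \<in> L") (simp_all add: insert_commute)
    then show "Q L" by (subst e)
  qed
next
  assume h: "\<forall>L\<subseteq>{1,2,3::nat}. Q L"
  show "Q {} \<and> Q {1} \<and> Q {2} \<and> Q {3} \<and> Q {1,2} \<and> Q {1,3} \<and> Q {2,3} \<and> Q {1,2,3}"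
    by (intro conjI; rule h[rule_format]; simp)
qed

lemma optA1[simp]: "opt_welfare 3 II {} bA = 0"
  by (rule opt_char[of "{}" "{}" "{}"]) (simp_all add: Trip_def welfare_def)

lemma optA2[simp]: "opt_welfare 3 II {1} bA = 2"
  by (rule opt_char[of "{0}" "{}" "{}"]) (simp_all add: Trip_def welfare_def)

lemma optA3[simp]: "opt_welfare 3 II {2} bA = 2"
  by (rule opt_char[of "{}" "{1}" "{}"]) (simp_all add: Trip_def welfare_def)

lemma optA4[simp]: "opt_welfare 3 II {3} bA = 2"
  by (rule opt_char[of "{}" "{}" "{0,1}"]) (simp_all add: Trip_def welfare_def)

lemma optA5[simp]: "opt_welfare 3 II {1,2} bA = 4"
  by (rule opt_char[of "{0}" "{1}" "{}"]) (simp_all add: Trip_def welfare_def)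

lemma optA6[simp]: "opt_welfare 3 II {1,3} bA = 2"
  by (rule opt_char[of "{0}" "{}" "{}"]) (simp_all add: Trip_def welfare_def)

lemma optA7[simp]: "opt_welfare 3 II {2,3} bA = 2"
  by (rule opt_char[of "{}" "{1}" "{}"]) (simp_all add: Trip_def welfare_def)

lemma optA8[simp]: "opt_welfare 3 II {1,2,3} bA = 4"
  by (rule opt_char[of "{0}" "{1}" "{}"]) (simp_all add: Trip_def welfare_def)

lemma optB9[simp]: "opt_welfare 3 II {} bB = 0"
  by (rule opt_char[of "{}" "{}" "{}"]) (simp_all add: Trip_def welfare_def)

lemma optB10[simp]: "opt_welfare 3 II {1} bB = 3"
  by (rule opt_char[of "{0,1}" "{}" "{}"]) (simp_all add: Trip_def welfare_def)

lemma optB11[simp]: "opt_welfare 3 II {2} bB = 2"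
  by (rule opt_char[of "{}" "{1}" "{}"]) (simp_all add: Trip_def welfare_def)

lemma optB12[simp]: "opt_welfare 3 II {3} bB = 2"
  by (rule opt_char[of "{}" "{}" "{0,1}"]) (simp_all add: Trip_def welfare_def)

lemma optB13[simp]: "opt_welfare 3 II {1,2} bB = 4"
  by (rule opt_char[of "{0}" "{1}" "{}"]) (simp_all add: Trip_def welfare_def)

lemma optB14[simp]: "opt_welfare 3 II {1,3} bB = 3"
  by (rule opt_char[of "{0,1}" "{}" "{}"]) (simp_all add: Trip_def welfare_def)

lemma optB15[simp]: "opt_welfare 3 II {2,3} bB = 2"
  by (rule opt_char[of "{}" "{1}" "{}"]) (simp_all add: Trip_def welfare_def)

lemma optB16[simp]: "opt_welfare 3 II {1,2,3} bB = 4"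
  by (rule opt_char[of "{0}" "{1}" "{}"]) (simp_all add: Trip_def welfare_def)


lemmas optS[simp] = optA1[unfolded One_nat_def] optA2[unfolded One_nat_def] optA3[unfolded One_nat_def] optA4[unfolded One_nat_def] optA5[unfolded One_nat_def] optA6[unfolded One_nat_def] optA7[unfolded One_nat_def] optA8[unfolded One_nat_def] optB9[unfolded One_nat_def] optB10[unfolded One_nat_def] optB11[unfolded One_nat_def] optB12[unfolded One_nat_def] optB13[unfolded One_nat_def] optB14[unfolded One_nat_def] optB15[unfolded One_nat_def] optB16[unfolded One_nat_def]

lemma xxv[simp]: "xx 1 = {0}" "xx (Suc 0) = {0}" "xx 2 = {1}" "xx 3 = {}"
  by (simp_all add: xx_def)

lemma coreA: "in_core 3 II bA xx p \<longleftrightarrow> (\<forall>i. i \<notin> {1,2,3} \<longrightarrow> p i = 0) \<and> 0 \<le> p 1 \<and> 0 \<le> p 2 \<and> 0 \<le> p 3 \<and> 2 \<le> p 1 + p 2"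
  unfolding in_core_def bid3 subs3
  by (simp add: welfare_def insert_Diff_if) (intro iffI conjI; elim conjE; simp; linarith)

lemma coreB: "in_core 3 II bB xx p \<longleftrightarrow> (\<forall>i. i \<notin> {1,2,3} \<longrightarrow> p i = 0) \<and> 0 \<le> p 1 \<and> 1 \<le> p 2 \<and> 0 \<le> p 3 \<and> 2 \<le> p 1 + p 2"
  unfolding in_core_def bid3 subs3
  by (simp add: welfare_def insert_Diff_if) (intro iffI conjI; elim conjE; simp; linarith)

lemma vcgA: "vcg_payment 3 II bA xx = (\<lambda>_. 0)"
  by (rule ext) (simp add: vcg_payment_def bid3 welfare_def insert_Diff_if)

lemma vcgB: "vcg_payment 3 II bB xx = (\<lambda>i. if i = 2 then 1 else 0)"
  by (rule ext) (simp add: vcg_payment_def bid3 welfare_def insert_Diff_if)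


definition pA :: payments where "pA = (\<lambda>i. if i = 1 \<or> i = 2 then 1 else 0)"
definition pB :: payments where "pB = (\<lambda>i. if i = 1 then 1/2 else if i = 2 then 3/2 else 0)"

lemma mrcA: "in_min_revenue_core 3 II bA xx p \<longleftrightarrow>
   (\<forall>i. i \<notin> {1,2,3} \<longrightarrow> p i = 0) \<and> 0 \<le> p 1 \<and> 0 \<le> p 2 \<and> p 3 = 0 \<and> p 1 + p 2 = 2"
proof
  assume h: "in_min_revenue_core 3 II bA xx p"
  have c: "in_core 3 II bA xx pA" by (simp add: coreA pA_def)
  have k: "in_core 3 II bA xx p" and le: "(\<Sum>i \<in> bidders 3. p i) \<le> (\<Sum>i \<in> bidders 3. pA i)"
    using h c unfolding in_min_revenue_core_def by blast+
  from le have le2: "p 1 + p 2 + p 3 \<le> 2" by (simp add: bid3 pA_def)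
  from k le2 show "(\<forall>i. i \<notin> {1,2,3} \<longrightarrow> p i = 0) \<and> 0 \<le> p 1 \<and> 0 \<le> p 2 \<and> p 3 = 0 \<and> p 1 + p 2 = 2"
    unfolding coreA by simp
next
  assume h: "(\<forall>i. i \<notin> {1,2,3} \<longrightarrow> p i = 0) \<and> 0 \<le> p 1 \<and> 0 \<le> p 2 \<and> p 3 = 0 \<and> p 1 + p 2 = 2"
  then show "in_min_revenue_core 3 II bA xx p"
    unfolding in_min_revenue_core_def bid3 coreA by auto
qed

lemma mrcB: "in_min_revenue_core 3 II bB xx p \<longleftrightarrow>
   (\<forall>i. i \<notin> {1,2,3} \<longrightarrow> p i = 0) \<and> 0 \<le> p 1 \<and> 1 \<le> p 2 \<and> p 3 = 0 \<and> p 1 + p 2 = 2"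
proof
  assume h: "in_min_revenue_core 3 II bB xx p"
  have c: "in_core 3 II bB xx pB" by (simp add: coreB pB_def)
  have k: "in_core 3 II bB xx p" and le: "(\<Sum>i \<in> bidders 3. p i) \<le> (\<Sum>i \<in> bidders 3. pB i)"
    using h c unfolding in_min_revenue_core_def by blast+
  from le have le2: "p 1 + p 2 + p 3 \<le> 2" by (simp add: bid3 pB_def)
  from k le2 show "(\<forall>i. i \<notin> {1,2,3} \<longrightarrow> p i = 0) \<and> 0 \<le> p 1 \<and> 1 \<le> p 2 \<and> p 3 = 0 \<and> p 1 + p 2 = 2"
    unfolding coreB by simp
next
  assume h: "(\<forall>i. i \<notin> {1,2,3} \<longrightarrow> p i = 0) \<and> 0 \<le> p 1 \<and> 1 \<le> p 2 \<and> p 3 = 0 \<and> p 1 + p 2 = 2"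
  then show "in_min_revenue_core 3 II bB xx p"
    unfolding in_min_revenue_core_def bid3 coreB by auto
qed

lemma sqA: assumes "p1 + p2 = (2::real)" shows "p1^2 + p2^2 = 2 * (p1 - 1)^2 + 2"
proof -
  have e: "p2 = 2 - p1" using assms by simp
  show ?thesis unfolding e by (simp add: power2_eq_square algebra_simps)
qed

lemma sqB: assumes "p1 + p2 = (2::real)" shows "p1^2 + (p2 - 1)^2 = 2 * (p1 - 1/2)^2 + 1/2"
proof -
  have e: "p2 = 2 - p1" using assms by simp
  show ?thesis unfolding e by (simp add: power2_eq_square algebra_simps)
qed

lemma nearA: "vcg_nearest 3 II bA xx = pA"
  unfolding vcg_nearest_def vcgA
proof (rule the_equality)
  show "in_min_revenue_core 3 II bA xx pA \<and>
    (\<forall>p'. in_min_revenue_core 3 II bA xx p' \<longrightarrow> pay_dist 3 pA (\<lambda>_. 0) \<le> pay_dist 3 p' (\<lambda>_. 0))"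
  proof (intro conjI allI impI)
    show "in_min_revenue_core 3 II bA xx pA" by (simp add: mrcA pA_def)
    fix p' assume "in_min_revenue_core 3 II bA xx p'"
    then have h: "p' 3 = 0" "p' 1 + p' 2 = 2" by (auto simp: mrcA)
    have "(p' 1)^2 + (p' 2)^2 \<ge> 2" using sqA[OF h(2)] by simp
    then show "pay_dist 3 pA (\<lambda>_. 0) \<le> pay_dist 3 p' (\<lambda>_. 0)"
      unfolding pay_dist_def bid3 using h by (simp add: pA_def)
  qed
next
  fix p assume "in_min_revenue_core 3 II bA xx p \<and>
    (\<forall>p'. in_min_revenue_core 3 II bA xx p' \<longrightarrow> pay_dist 3 p (\<lambda>_. 0) \<le> pay_dist 3 p' (\<lambda>_. 0))"
  then have m: "in_min_revenue_core 3 II bA xx p" and d: "pay_dist 3 p (\<lambda>_. 0) \<le> pay_dist 3 pA (\<lambda>_. 0)"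
    by (auto simp: mrcA pA_def)
  from m have h: "\<forall>i. i \<notin> {1,2,3} \<longrightarrow> p i = 0" "p 3 = 0" "p 1 + p 2 = 2" by (auto simp: mrcA)
  from d h have "(p 1)^2 + (p 2)^2 \<le> 2" unfolding pay_dist_def bid3 by (simp add: pA_def)
  with sqA[OF h(3)] have "(p 1 - 1)^2 \<le> 0" by simp
  then have "p 1 = 1" by simp
  with h show "p = pA" unfolding pA_def by (intro ext) auto
qed

lemma nearB: "vcg_nearest 3 II bB xx = pB"
  unfolding vcg_nearest_def vcgB
proof (rule the_equality)
  show "in_min_revenue_core 3 II bB xx pB \<and>
    (\<forall>p'. in_min_revenue_core 3 II bB xx p' \<longrightarrow> pay_dist 3 pB (\<lambda>i. if i = 2 then 1 else 0) \<le> pay_dist 3 p' (\<lambda>i. if i = 2 then 1 else 0))"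
  proof (intro conjI allI impI)
    show "in_min_revenue_core 3 II bB xx pB" by (simp add: mrcB pB_def)
    fix p' assume "in_min_revenue_core 3 II bB xx p'"
    then have h: "p' 3 = 0" "p' 1 + p' 2 = 2" by (auto simp: mrcB)
    have "(p' 1)^2 + (p' 2 - 1)^2 \<ge> 1/2" using sqB[OF h(2)] by simp
    then show "pay_dist 3 pB (\<lambda>i. if i = 2 then 1 else 0) \<le> pay_dist 3 p' (\<lambda>i. if i = 2 then 1 else 0)"
      unfolding pay_dist_def bid3 using h by (simp add: pB_def power2_eq_square)
  qed
next
  fix p assume "in_min_revenue_core 3 II bB xx p \<and>
    (\<forall>p'. in_min_revenue_core 3 II bB xx p' \<longrightarrow> pay_dist 3 p (\<lambda>i. if i = 2 then 1 else 0) \<le> pay_dist 3 p' (\<lambda>i. if i = 2 then 1 else 0))"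
  then have m: "in_min_revenue_core 3 II bB xx p" and d: "pay_dist 3 p (\<lambda>i. if i = 2 then 1 else 0) \<le> pay_dist 3 pB (\<lambda>i. if i = 2 then 1 else 0)"
    by (auto simp: mrcB pB_def)
  from m have h: "\<forall>i. i \<notin> {1,2,3} \<longrightarrow> p i = 0" "p 3 = 0" "p 1 + p 2 = 2" by (auto simp: mrcB)
  from d h have "(p 1)^2 + (p 2 - 1)^2 \<le> 1/2" unfolding pay_dist_def bid3 by (simp add: pB_def power2_eq_square)
  with sqB[OF h(3)] have "(p 1 - 1/2)^2 \<le> 0" by simp
  then have "p 1 = 1/2" by simp
  with h show "p = pB" unfolding pB_def by (intro ext) auto
qed

lemma effic: "bb = bA \<or> bb = bB \<Longrightarrow> efficient 3 II bb xx"
  unfolding efficient_def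
proof (intro conjI allI impI)
  show "is_allocation 3 II xx" by (auto simp: is_allocation_def bid3 xx_def II_def)
  fix y assume "bb = bA \<or> bb = bB" and y: "is_allocation 3 II y"
  then show "welfare (bidders 3) bb y \<le> welfare (bidders 3) bb xx"
    using alloc_trip[OF y] alloc_mk[OF y]
    by (auto simp: Trip_def bid3 welfare_def mk_def xx_def bA_def bB_def)
qed

theorem proposition1:
  shows "\<exists>(M::nat set) (n::nat) (I::nat \<Rightarrow> nat set set) (x::allocation) (i::nat) (b::bids) (b'::bids).
     auction_instance M n I \<and> i \<in> bidders n \<and>
     valid_bids n I b \<and> valid_bids n I b' \<and>
     efficient n I b x \<and> efficient n I b' x \<and>
     (\<forall>j. j \<noteq> i \<longrightarrow> b' j = b j) \<and> (\<forall>K. b i K \<le> b' i K) \<and>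
     vcg_nearest n I b' x i < vcg_nearest n I b x i"
proof (intro exI conjI)
  show "auction_instance {0,1} 3 II" by (auto simp: auction_instance_def bid3 II_def)
  show "1 \<in> bidders 3" by (simp add: bid3)
  show "valid_bids 3 II bA" by (auto simp: valid_bids_def bid3 II_def bA_def)
  show "valid_bids 3 II bB" by (auto simp: valid_bids_def bid3 II_def bA_def bB_def)
  show "efficient 3 II bA xx" by (rule effic) simp
  show "efficient 3 II bB xx" by (rule effic) simp
  show "\<forall>j. j \<noteq> 1 \<longrightarrow> bB j = bA j" by (auto simp: bB_def)
  show "\<forall>K. bA 1 K \<le> bB 1 K" by (auto simp: bB_def bA_def)
  show "vcg_nearest 3 II bB xx 1 < vcg_nearest 3 II bA xx 1" by (simp add: nearA nearB pA_def pB_def)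
qed

end
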